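(* Fix $k\in[m-1]$, $\delta_t\in(0,1)$, and let $q_k=h_{(k)}-h_{(k+1)}$. (i) PTR-Laplace: with $\epsilon>0$, compute $\hat q_k=q_k+L-\log(1/\delta_t)/\epsilon$ with $L\sim\mathrm{Lap}(1/\epsilon)$, output $\perp$ if $\hat q_k\le1$ and otherwise output $\{i_{(1)},\dots,i_{(k)}\}$. This mechanism satisfies $(\epsilon,\delta_t)$-DP. (ii) PTR-Gaussian: with $\sigma_2>0$, compute $\hat q_k=\max\{1,q_k\}+Z-\sigma_2\sqrt{2\log(1/\delta_t)}$ with $Z\sim\mathcal{N}(0,\sigma_2^2)$, output $\perp$ if $\hat q_k\le1$ and otherwise output $\{i_{(1)},\dots,i_{(k)}\}$. This mechanism satisfies $\delta_t$-approximate-$(\alpha,\frac{\alpha}{2\sigma_2^2})$-RDP.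
   Context: Setting: a dataset consists of users; there are $m$ candidates and each user votes $1$ for an arbitrary subset of candidates; $h_j$ is the number of users voting for candidate $j$. Datasets are neighboring if one is obtained from the other by adding or removing one user. $h_{(1)}\ge\dots\ge h_{(m)}$ are sorted counts with corresponding candidates $i_{(1)},\dots,i_{(m)}$. $\mathrm{Lap}(b)$ is the Laplace distribution with density $\frac{1}{2b}e^{-|x|/b}$. $(\epsilon,\delta)$-DP: $\Pr[\mathcal{M}(D)\in O]\le e^\epsilon\Pr[\mathcal{M}(D')\in O]+\delta$ for all neighbors and measurable $O$. Rényi divergence: $\mathbb{D}_\alpha(P\|Q)=\frac{1}{\alpha-1}\log\mathbb{E}_{o\sim Q}[(P(o)/Q(o))^\alpha]$. $\mathcal{M}$ is $\delta$-approximate-$(\alpha,\epsilon(\alpha))$-RDP if for all neighbors $D,D'$ there exist events $E$ (depending on $\mathcal{M}(D)$) and $E'$ (depending on $\mathcal{M}(D')$) with $\Pr[E]\ge1-\delta$, $\Pr[E']\ge1-\delta$ and $\mathbb{D}_\alpha(\mathcal{M}(D)|E\|\mathcal{M}(D')|E')\le\epsilon(\alpha)$ for all $\alpha\ge1$. *)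

theory Defs
  imports "HOL-Probability.Probability"
begin

text \<open>A dataset is a finite multiset of users; each user is the set of candidates
  (from 0..m-1) she votes for.\<close>

definition valid_dataset :: "nat \<Rightarrow> nat set multiset \<Rightarrow> bool" where
  "valid_dataset m D \<longleftrightarrow> (\<forall>S \<in># D. S \<subseteq> {..<m})"

definition neighboring :: "nat set multiset \<Rightarrow> nat set multiset \<Rightarrow> bool" where
  "neighboring D D' \<longleftrightarrow> (\<exists>S. D' = D + {#S#} \<or> D = D' + {#S#})"

definition cnt :: "nat set multiset \<Rightarrow> nat \<Rightarrow> nat" where
  "cnt D j = size (filter_mset (\<lambda>S. j \<in> S) D)"

text \<open>Counts sorted in non-increasing order; h_(i) is entry i-1 (1-based index i).\<close>
definition sorted_counts :: "nat \<Rightarrow> nat set multiset \<Rightarrow> nat list" where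
  "sorted_counts m D = rev (sort (map (cnt D) [0..<m]))"

definition hsorted :: "nat \<Rightarrow> nat set multiset \<Rightarrow> nat \<Rightarrow> nat" where
  "hsorted m D i = sorted_counts m D ! (i - 1)"

definition gap :: "nat \<Rightarrow> nat \<Rightarrow> nat set multiset \<Rightarrow> real" where
  "gap m k D = real (hsorted m D k) - real (hsorted m D (k + 1))"

text \<open>The candidates i_(1),...,i_(k): candidates sorted by count in non-increasing
  order, ties broken by smaller index first; candidate j is among the first k iff fewer
  than k candidates precede it in this order.\<close>
definition topk :: "nat \<Rightarrow> nat \<Rightarrow> nat set multiset \<Rightarrow> nat set" where
  "topk m k D = {j. j < m \<and>
     card {j'. j' < m \<and> (cnt D j' > cnt D j \<or> (cnt D j' = cnt D j \<and> j' < j))} < k}"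

definition laplace_density :: "real \<Rightarrow> real \<Rightarrow> real" where
  "laplace_density b x = exp (- \<bar>x\<bar> / b) / (2 * b)"

definition laplace_distr :: "real \<Rightarrow> real measure" where
  "laplace_distr b = density lborel (\<lambda>x. ennreal (laplace_density b x))"

definition gauss_distr :: "real \<Rightarrow> real measure" where
  "gauss_distr \<sigma> = density lborel (\<lambda>x. ennreal (normal_density 0 \<sigma> x))"

text \<open>Outputs: None stands for \<bottom>, Some S for the released set.\<close>
definition ptr_laplace_out ::
  "nat \<Rightarrow> nat \<Rightarrow> real \<Rightarrow> real \<Rightarrow> nat set multiset \<Rightarrow> real \<Rightarrow> nat set option" where
  "ptr_laplace_out m k \<epsilon> \<delta> D L =
     (if gap m k D + L - ln (1 / \<delta>) / \<epsilon> \<le> 1 then None else Some (topk m k D))"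

definition ptr_gauss_out ::
  "nat \<Rightarrow> nat \<Rightarrow> real \<Rightarrow> real \<Rightarrow> nat set multiset \<Rightarrow> real \<Rightarrow> nat set option" where
  "ptr_gauss_out m k \<sigma> \<delta> D Z =
     (if max 1 (gap m k D) + Z - \<sigma> * sqrt (2 * ln (1 / \<delta>)) \<le> 1 then None
      else Some (topk m k D))"

text \<open>A mechanism is given by a noise distribution N and an output map out D noise;
  its output distribution on dataset D is the push-forward of N.\<close>
definition mech_distr :: "'n measure \<Rightarrow> ('d \<Rightarrow> 'n \<Rightarrow> 'o) \<Rightarrow> 'd \<Rightarrow> 'o measure" where
  "mech_distr N out D = distr N (count_space UNIV) (out D)"

definition is_dp :: "nat \<Rightarrow> 'n measure \<Rightarrow> (nat set multiset \<Rightarrow> 'n \<Rightarrow> 'o) \<Rightarrow> real \<Rightarrow> real \<Rightarrow> bool" where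
  "is_dp m N out \<epsilon> \<delta> \<longleftrightarrow>
     (\<forall>D D'. valid_dataset m D \<and> valid_dataset m D' \<and> neighboring D D' \<longrightarrow>
        (\<forall>A. measure (mech_distr N out D) A \<le> exp \<epsilon> * measure (mech_distr N out D') A + \<delta>))"

definition cond_on :: "'a measure \<Rightarrow> 'a set \<Rightarrow> 'a measure" where
  "cond_on M E = density M (\<lambda>x. indicator E x / emeasure M E)"

definition renyi_div :: "real \<Rightarrow> 'o measure \<Rightarrow> 'o measure \<Rightarrow> ereal" where
  "renyi_div \<alpha> P Q =
     (if \<exists>y. measure Q {y} = 0 \<and> measure P {y} \<noteq> 0 then \<infinity>
      else if \<alpha> = 1 then ereal (\<integral>y. ln (measure P {y} / measure Q {y}) \<partial>P)
      else ereal (1 / (\<alpha> - 1) * ln (\<integral>y. (measure P {y} / measure Q {y}) powr \<alpha> \<partial>Q)))"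

text \<open>delta-approximate-(alpha, eps(alpha))-RDP; the events E, E' are events of the
  probability space of the mechanism run on D resp. D' (i.e. on its internal randomness).\<close>
definition approx_rdp ::
  "nat \<Rightarrow> 'n measure \<Rightarrow> (nat set multiset \<Rightarrow> 'n \<Rightarrow> 'o) \<Rightarrow> real \<Rightarrow> (real \<Rightarrow> real) \<Rightarrow> bool" where
  "approx_rdp m N out \<delta> eps \<longleftrightarrow>
     (\<forall>D D'. valid_dataset m D \<and> valid_dataset m D' \<and> neighboring D D' \<longrightarrow>
        (\<exists>E E'. E \<in> sets N \<and> E' \<in> sets N \<and>
           measure N E \<ge> 1 - \<delta> \<and> measure N E' \<ge> 1 - \<delta> \<and>
           (\<forall>\<alpha>\<ge>1. renyi_div \<alpha> (mech_distr (cond_on N E) out D) (mech_distr (cond_on N E') out D')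
                     \<le> ereal (eps \<alpha>))))"

end

theory Submission
  imports Defs
begin

lemma card_ge_sorted:
  fixes xs :: "nat list"
  assumes "sorted xs" "p < length xs"
  shows "v \<le> xs ! p \<longleftrightarrow> length xs - p \<le> card {q. q < length xs \<and> v \<le> xs ! q}"
proof
  assume "v \<le> xs ! p"
  hence "{p..<length xs} \<subseteq> {q. q < length xs \<and> v \<le> xs ! q}"
    using assms by (auto intro: order_trans[OF _ sorted_nth_mono])
  from card_mono[OF _ this] show "length xs - p \<le> card {q. q < length xs \<and> v \<le> xs ! q}" by simp
next
  assume h: "length xs - p \<le> card {q. q < length xs \<and> v \<le> xs ! q}"
  show "v \<le> xs ! p"
  proof (rule ccontr)
    assume "\<not> v \<le> xs ! p"
    hence "{q. q < length xs \<and> v \<le> xs ! q} \<subseteq> {Suc p..<length xs}"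
      using assms by (auto simp: not_le) (metis le_trans linorder_not_le not_less_eq_eq sorted_nth_mono)
    from card_mono[OF _ this] h assms show False by simp
  qed
qed

lemma hsorted_char:
  assumes "1 \<le> i" "i \<le> m"
  shows "v \<le> hsorted m D i \<longleftrightarrow> i \<le> card {j. j < m \<and> v \<le> cnt D j}"
proof -
  define xs where "xs = sort (map (cnt D) [0..<m])"
  have len: "length xs = m" by (simp add: xs_def)
  have "hsorted m D i = xs ! (m - i)"
    unfolding hsorted_def sorted_counts_def xs_def[symmetric] using assms len
    by (simp add: rev_nth Suc_diff_le)
  moreover have "card {q. q < length xs \<and> v \<le> xs ! q} = card {j. j < m \<and> v \<le> cnt D j}"
  proof -
    have "card {q. q < length xs \<and> v \<le> xs ! q} = length (filter ((\<le>) v) xs)"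
      by (simp add: length_filter_conv_card)
    also have "\<dots> = size (filter_mset ((\<le>) v) (mset xs))"
      by (metis mset_filter size_mset)
    also have "\<dots> = size (filter_mset ((\<le>) v) (mset (map (cnt D) [0..<m])))"
      by (simp add: xs_def)
    also have "\<dots> = length (filter ((\<le>) v) (map (cnt D) [0..<m]))"
      by (metis mset_filter size_mset)
    also have "\<dots> = card {j. j < m \<and> v \<le> cnt D j}"
      by (simp add: length_filter_conv_card cong: conj_cong)
    finally show ?thesis .
  qed
  moreover have "sorted xs" by (simp add: xs_def)
  ultimately show ?thesis using card_ge_sorted[of xs "m - i" v] assms len by simp
qed

lemma cnt_add: "cnt (add_mset S D) j = cnt D j + (if j \<in> S then 1 else 0)"
  by (simp add: cnt_def)

lemma hsorted_add:
  assumes "1 \<le> i" "i \<le> m"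
  shows "hsorted m D i \<le> hsorted m (D + {#S#}) i \<and> hsorted m (D + {#S#}) i \<le> hsorted m D i + 1"
proof
  let ?v = "hsorted m D i"
  have "i \<le> card {j. j < m \<and> ?v \<le> cnt D j}" using hsorted_char[OF assms, where v="?v" and D=D] by simp
  also have "\<dots> \<le> card {j. j < m \<and> ?v \<le> cnt (D + {#S#}) j}"
    by (rule card_mono) (auto simp: cnt_add)
  finally show "?v \<le> hsorted m (D + {#S#}) i" using hsorted_char[OF assms] by simp
next
  let ?w = "hsorted m (D + {#S#}) i"
  have "i \<le> card {j. j < m \<and> ?w \<le> cnt (D + {#S#}) j}" using hsorted_char[OF assms, where v="?w" and D="D + {#S#}"] by simp
  also have "\<dots> \<le> card {j. j < m \<and> ?w - 1 \<le> cnt D j}"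
    by (rule card_mono) (auto simp: cnt_add split: if_splits)
  finally have "?w - 1 \<le> hsorted m D i" using hsorted_char[OF assms] by simp
  thus "?w \<le> hsorted m D i + 1" by simp
qed

lemma gap_add:
  assumes "1 \<le> k" "k + 1 \<le> m"
  shows "\<bar>gap m k D - gap m k (D + {#S#})\<bar> \<le> 1"
  using hsorted_add[of k m D S] hsorted_add[of "k+1" m D S] assms
  unfolding gap_def by auto

lemma gap_sens:
  assumes "1 \<le> k" "k + 1 \<le> m" "neighboring D D'"
  shows "\<bar>gap m k D - gap m k D'\<bar> \<le> 1"
proof -
  obtain S where "D' = D + {#S#} \<or> D = D' + {#S#}" using assms(3) unfolding neighboring_def by blast
  thus ?thesis
  proof
    assume "D' = D + {#S#}" thus ?thesis using gap_add[OF assms(1,2), of D S] by simp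
  next
    assume "D = D' + {#S#}" thus ?thesis using gap_add[OF assms(1,2), of D' S] by (simp add: abs_minus_commute)
  qed
qed

lemma topk_thresh:
  assumes "card {j. j < m \<and> v \<le> cnt D j} = k"
  shows "topk m k D = {j. j < m \<and> v \<le> cnt D j}"
proof -
  let ?G = "{j. j < m \<and> v \<le> cnt D j}"
  let ?P = "\<lambda>j. {j'. j' < m \<and> (cnt D j' > cnt D j \<or> (cnt D j' = cnt D j \<and> j' < j))}"
  have fin: "finite ?G" by simp
  show ?thesis
  proof (rule set_eqI, rule iffI)
    fix j assume "j \<in> topk m k D"
    hence j: "j < m" "card (?P j) < k" unfolding topk_def by auto
    show "j \<in> ?G"
    proof (rule ccontr)
      assume "j \<notin> ?G"
      hence "?G \<subseteq> ?P j" using j by auto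
      from card_mono[OF _ this] j assms show False by simp
    qed
  next
    fix j assume jG: "j \<in> ?G"
    have "?P j \<subseteq> ?G - {j}" using jG by auto
    from card_mono[OF _ this] have "card (?P j) \<le> card (?G - {j})" by simp
    also have "\<dots> < k"
    proof -
      have "card ?G > 0" using jG fin card_gt_0_iff by blast
      thus ?thesis using jG assms fin by (simp add: card_Diff_singleton)
    qed
    finally show "j \<in> topk m k D" using jG unfolding topk_def by auto
  qed
qed

lemma gap_big_card:
  assumes "1 \<le> k" "k + 1 \<le> m" "gap m k D > 1"
  defines "v \<equiv> hsorted m D k"
  shows "card {j. j < m \<and> v \<le> cnt D j} = k"
    and "{j. j < m \<and> v - 1 \<le> cnt D j} = {j. j < m \<and> v \<le> cnt D j}"
    and "2 \<le> v"
proof -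
  have lt: "hsorted m D (k+1) + 2 \<le> v" using assms(3) unfolding gap_def v_def by linarith
  thus "2 \<le> v" by simp
  have c1: "k \<le> card {j. j < m \<and> v \<le> cnt D j}"
    using hsorted_char[of k m v D] assms unfolding v_def by simp
  have "\<not> v - 1 \<le> hsorted m D (k+1)" using lt by simp
  hence c2: "\<not> k + 1 \<le> card {j. j < m \<and> v - 1 \<le> cnt D j}"
    using hsorted_char[of "k+1" m "v - 1" D] assms by simp
  have sub: "{j. j < m \<and> v \<le> cnt D j} \<subseteq> {j. j < m \<and> v - 1 \<le> cnt D j}" by auto
  from card_mono[OF _ sub] c1 c2 show "card {j. j < m \<and> v \<le> cnt D j} = k" by simp
  with card_subset_eq[OF _ sub] card_mono[OF _ sub] c2 show
    "{j. j < m \<and> v - 1 \<le> cnt D j} = {j. j < m \<and> v \<le> cnt D j}" by simp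
qed

lemma topk_stable_add:
  assumes "1 \<le> k" "k + 1 \<le> m"
  shows "gap m k D > 1 \<Longrightarrow> topk m k (D + {#S#}) = topk m k D"
    and "gap m k (D + {#S#}) > 1 \<Longrightarrow> topk m k (D + {#S#}) = topk m k D"
proof -
  assume g: "gap m k D > 1"
  define v where "v = hsorted m D k"
  note gb = gap_big_card[OF assms g, folded v_def]
  have "{j. j < m \<and> v \<le> cnt (D + {#S#}) j} = {j. j < m \<and> v \<le> cnt D j}"
  proof -
    have "{j. j < m \<and> v \<le> cnt (D + {#S#}) j} \<subseteq> {j. j < m \<and> v - 1 \<le> cnt D j}"
      by (auto simp: cnt_add split: if_splits)
    moreover have "{j. j < m \<and> v \<le> cnt D j} \<subseteq> {j. j < m \<and> v \<le> cnt (D + {#S#}) j}"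
      by (auto simp: cnt_add)
    ultimately show ?thesis using gb(2) by blast
  qed
  thus "topk m k (D + {#S#}) = topk m k D"
    using topk_thresh[of m v D k] topk_thresh[of m v "D + {#S#}" k] gb(1) by simp
next
  assume g: "gap m k (D + {#S#}) > 1"
  define v where "v = hsorted m (D + {#S#}) k"
  note gb = gap_big_card[OF assms g, folded v_def]
  have "{j. j < m \<and> v - 1 \<le> cnt D j} = {j. j < m \<and> v \<le> cnt (D + {#S#}) j}"
  proof -
    have "{j. j < m \<and> v - 1 \<le> cnt D j} \<subseteq> {j. j < m \<and> v - 1 \<le> cnt (D + {#S#}) j}"
      by (auto simp: cnt_add)
    moreover have "{j. j < m \<and> v \<le> cnt (D + {#S#}) j} \<subseteq> {j. j < m \<and> v - 1 \<le> cnt D j}"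
      by (auto simp: cnt_add split: if_splits)
    ultimately show ?thesis using gb(2) by blast
  qed
  thus "topk m k (D + {#S#}) = topk m k D"
    using topk_thresh[of m "v - 1" D k] topk_thresh[of m v "D + {#S#}" k] gb(1) by simp
qed

lemma topk_diff_gap:
  assumes "1 \<le> k" "k + 1 \<le> m" "neighboring D D'" "topk m k D \<noteq> topk m k D'"
  shows "gap m k D \<le> 1 \<and> gap m k D' \<le> 1"
proof -
  obtain S where "D' = D + {#S#} \<or> D = D' + {#S#}" using assms(3) unfolding neighboring_def by blast
  thus ?thesis
  proof
    assume "D' = D + {#S#}" thus ?thesis using topk_stable_add[OF assms(1,2), of D S] assms(4) by force
  next
    assume "D = D' + {#S#}" thus ?thesis using topk_stable_add[OF assms(1,2), of D' S] assms(4) by force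
  qed
qed

lemma two_point_meas:
  fixes M :: "'a measure" and out :: "'a \<Rightarrow> 'o"
  assumes "\<And>y. y \<in> space M \<Longrightarrow> out y = (if y \<in> A then o1 else o2)"
    and "A \<in> sets M"
  shows "out \<in> measurable M (count_space UNIV)"
proof -
  have "(\<lambda>y. if y \<in> A then o1 else o2) \<in> measurable M (count_space UNIV)"
    by (rule measurable_If_set) (use assms in auto)
  thus ?thesis using measurable_cong[of M out "\<lambda>y. if y \<in> A then o1 else o2", OF assms(1)] by simp
qed

lemma two_point_integral:
  fixes M :: "'a measure" and out :: "'a \<Rightarrow> 'o" and h :: "'o \<Rightarrow> real"
  assumes P: "prob_space M"
    and out: "\<And>y. y \<in> space M \<Longrightarrow> out y = (if y \<in> A then o1 else o2)"
    and A: "A \<in> sets M"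
  shows "(\<integral>y. h y \<partial>distr M (count_space UNIV) out) = h o1 * measure M A + h o2 * (1 - measure M A)"
proof -
  interpret prob_space M by fact
  have ms: "out \<in> measurable M (count_space UNIV)" using two_point_meas[OF out A] .
  have "(\<integral>y. h y \<partial>distr M (count_space UNIV) out) = (\<integral>y. h (out y) \<partial>M)"
    by (rule integral_distr[OF ms]) simp
  also have "\<dots> = (\<integral>y. h o1 * indicator A y + h o2 * indicator (space M - A) y \<partial>M)"
    by (rule Bochner_Integration.integral_cong) (auto simp: out indicator_def)
  also have "\<dots> = h o1 * measure M A + h o2 * measure M (space M - A)"
  proof -
    have i1: "integrable M (indicator A :: 'a \<Rightarrow> real)"
      using A by (intro integrable_real_indicator) (simp_all add: less_top[symmetric])
    have i2: "integrable M (indicator (space M - A) :: 'a \<Rightarrow> real)"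
      using A by (intro integrable_real_indicator) (auto simp: less_top[symmetric])
    show ?thesis
      using A i1 i2 by (subst Bochner_Integration.integral_add) (auto simp: Int_absorb2 sets.sets_into_space)
  qed
  also have "measure M (space M - A) = 1 - measure M A" using A by (rule prob_compl)
  finally show ?thesis .
qed

lemma two_point_singleton:
  fixes M :: "'a measure" and out :: "'a \<Rightarrow> 'o"
  assumes P: "prob_space M"
    and out: "\<And>y. y \<in> space M \<Longrightarrow> out y = (if y \<in> A then o1 else o2)"
    and A: "A \<in> sets M" and ne: "o1 \<noteq> o2"
  shows "measure (distr M (count_space UNIV) out) {z} =
    (if z = o1 then measure M A else if z = o2 then 1 - measure M A else 0)"
proof -
  interpret prob_space M by fact
  have ms: "out \<in> measurable M (count_space UNIV)" using two_point_meas[OF out A] .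
  have "measure (distr M (count_space UNIV) out) {z} = measure M (out -` {z} \<inter> space M)"
    by (rule measure_distr[OF ms]) simp
  also have "out -` {z} \<inter> space M = (if z = o1 then A else if z = o2 then space M - A else {})"
  proof -
    have "A \<subseteq> space M" using A sets.sets_into_space by auto
    thus ?thesis using ne by (auto simp: out split: if_splits)
  qed
  finally show ?thesis using A by (auto simp: prob_compl)
qed

definition two_renyi :: "real \<Rightarrow> real \<Rightarrow> real \<Rightarrow> real" where
  "two_renyi \<alpha> p q = (if \<alpha> = 1 then p * ln (p / q) + (1 - p) * ln ((1 - p) / (1 - q))
     else 1 / (\<alpha> - 1) * ln (q * (p / q) powr \<alpha> + (1 - q) * ((1 - p) / (1 - q)) powr \<alpha>))"

lemma two_point_renyi:
  fixes M1 M2 :: "'a measure" and out1 out2 :: "'a \<Rightarrow> 'o"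
  assumes P1: "prob_space M1" and P2: "prob_space M2"
    and out1: "\<And>y. y \<in> space M1 \<Longrightarrow> out1 y = (if y \<in> A1 then o1 else o2)"
    and out2: "\<And>y. y \<in> space M2 \<Longrightarrow> out2 y = (if y \<in> A2 then o1 else o2)"
    and A1: "A1 \<in> sets M1" and A2: "A2 \<in> sets M2" and ne: "o1 \<noteq> o2"
    and ac0: "measure M2 A2 = 0 \<Longrightarrow> measure M1 A1 = 0"
    and ac1: "measure M2 A2 = 1 \<Longrightarrow> measure M1 A1 = 1"
  shows "renyi_div \<alpha> (distr M1 (count_space UNIV) out1) (distr M2 (count_space UNIV) out2)
     = ereal (two_renyi \<alpha> (measure M1 A1) (measure M2 A2))"
proof -
  let ?P = "distr M1 (count_space UNIV) out1" and ?Q = "distr M2 (count_space UNIV) out2"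
  let ?p = "measure M1 A1" and ?q = "measure M2 A2"
  note s1 = two_point_singleton[OF P1 out1 A1 ne] and s2 = two_point_singleton[OF P2 out2 A2 ne]
  have e1: "measure ?P {o1} = ?p" "measure ?P {o2} = 1 - ?p" "measure ?Q {o1} = ?q" "measure ?Q {o2} = 1 - ?q"
    using s1[of o1] s1[of o2] s2[of o1] s2[of o2] ne by auto
  have nz: "\<not> (\<exists>y. measure ?Q {y} = 0 \<and> measure ?P {y} \<noteq> 0)"
    using ac0 ac1 by (auto simp: s1 s2)
  show ?thesis
  proof (cases "\<alpha> = 1")
    case True
    have "(\<integral>y. ln (measure ?P {y} / measure ?Q {y}) \<partial>?P) = ?p * ln (?p / ?q) + (1 - ?p) * ln ((1 - ?p) / (1 - ?q))"
    proof -
      have "(\<integral>y. ln (measure ?P {y} / measure ?Q {y}) \<partial>?P) = ln (measure ?P {o1} / measure ?Q {o1}) * ?p + ln (measure ?P {o2} / measure ?Q {o2}) * (1 - ?p)"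
        by (rule two_point_integral[OF P1 out1 A1])
      also have "\<dots> = ?p * ln (?p / ?q) + (1 - ?p) * ln ((1 - ?p) / (1 - ?q))"
        unfolding e1 by (simp add: mult.commute)
      finally show ?thesis .
    qed
    thus ?thesis using nz True unfolding renyi_div_def two_renyi_def by simp
  next
    case False
    have "(\<integral>y. (measure ?P {y} / measure ?Q {y}) powr \<alpha> \<partial>?Q) = ?q * (?p / ?q) powr \<alpha> + (1 - ?q) * ((1 - ?p) / (1 - ?q)) powr \<alpha>"
    proof -
      have "(\<integral>y. (measure ?P {y} / measure ?Q {y}) powr \<alpha> \<partial>?Q) = (measure ?P {o1} / measure ?Q {o1}) powr \<alpha> * ?q + (measure ?P {o2} / measure ?Q {o2}) powr \<alpha> * (1 - ?q)"
        by (rule two_point_integral[OF P2 out2 A2])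
      also have "\<dots> = ?q * (?p / ?q) powr \<alpha> + (1 - ?q) * ((1 - ?p) / (1 - ?q)) powr \<alpha>"
        unfolding e1 by (simp add: mult.commute)
      finally show ?thesis .
    qed
    thus ?thesis using nz False unfolding renyi_div_def two_renyi_def by simp
  qed
qed

lemma young_tangent:
  fixes x \<alpha> :: real
  assumes "\<alpha> > 1" "x \<ge> 0"
  shows "\<alpha> * x - (\<alpha> - 1) \<le> x powr \<alpha>"
proof (cases "x = 0")
  case True thus ?thesis using assms by simp
next
  case False
  hence xp: "x > 0" using assms by simp
  have "(x powr \<alpha>) powr (1/\<alpha>) * 1 powr (1 - 1/\<alpha>) \<le> (1/\<alpha>) * x powr \<alpha> + (1 - 1/\<alpha>) * 1"
    using assms xp by (intro Youngs_inequality_0) auto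
  moreover have "(x powr \<alpha>) powr (1/\<alpha>) = x" using assms xp by (simp add: powr_powr)
  ultimately have "x \<le> (1/\<alpha>) * x powr \<alpha> + (1 - 1/\<alpha>)" by simp
  hence "\<alpha> * x \<le> \<alpha> * ((1/\<alpha>) * x powr \<alpha> + (1 - 1/\<alpha>))" using assms by simp
  also have "\<dots> = x powr \<alpha> + (\<alpha> - 1)" using assms by (simp add: field_simps)
  finally show ?thesis by simp
qed

lemma pointwise_tangent:
  fixes u v r \<alpha> :: real
  assumes "\<alpha> > 1" "u \<ge> 0" "v > 0" "r > 0"
  shows "\<alpha> * r powr (\<alpha> - 1) * u - (\<alpha> - 1) * r powr \<alpha> * v \<le> u powr \<alpha> * v powr (1 - \<alpha>)"
proof (cases "u = 0")
  case True thus ?thesis using assms by simp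
next
  case False
  hence up: "u > 0" using assms by simp
  define x where "x = u / (v * r)"
  have xp: "x > 0" using up assms by (simp add: x_def)
  have t: "\<alpha> * x - (\<alpha> - 1) \<le> x powr \<alpha>" using young_tangent[OF assms(1)] xp by simp
  have pos: "v * r powr \<alpha> > 0" using assms by simp
  from mult_right_mono[OF t less_imp_le[OF pos]]
  have "(\<alpha> * x - (\<alpha> - 1)) * (v * r powr \<alpha>) \<le> x powr \<alpha> * (v * r powr \<alpha>)" .
  moreover have "(\<alpha> * x - (\<alpha> - 1)) * (v * r powr \<alpha>) = \<alpha> * r powr (\<alpha> - 1) * u - (\<alpha> - 1) * r powr \<alpha> * v"
  proof -
    have "x * (v * r powr \<alpha>) = u * r powr (\<alpha> - 1)"
      using assms by (simp add: x_def powr_diff field_simps)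
    thus ?thesis by (simp add: algebra_simps)
  qed
  moreover have "x powr \<alpha> * (v * r powr \<alpha>) = u powr \<alpha> * v powr (1 - \<alpha>)"
    using assms up by (simp add: x_def powr_divide powr_mult powr_diff field_simps)
  ultimately show ?thesis by simp
qed

lemma gauss_prod:
  fixes \<sigma> \<alpha> \<mu> y :: real
  assumes "\<sigma> > 0"
  shows "normal_density 0 \<sigma> y powr \<alpha> * normal_density \<mu> \<sigma> y powr (1 - \<alpha>)
       = exp (\<alpha> * (\<alpha> - 1) * \<mu>\<^sup>2 / (2 * \<sigma>\<^sup>2)) * normal_density ((1 - \<alpha>) * \<mu>) \<sigma> y"
proof -
  define C where "C = 1 / sqrt (2 * pi * \<sigma>\<^sup>2)"
  have C: "C > 0" using assms by (simp add: C_def)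
  have nd: "normal_density m \<sigma> y = C * exp (-(y - m)\<^sup>2 / (2 * \<sigma>\<^sup>2))" for m
    by (simp add: normal_density_def C_def)
  have "normal_density 0 \<sigma> y powr \<alpha> * normal_density \<mu> \<sigma> y powr (1 - \<alpha>)
     = (C powr \<alpha> * C powr (1 - \<alpha>)) * exp (\<alpha> * (-(y - 0)\<^sup>2 / (2 * \<sigma>\<^sup>2)) + (1 - \<alpha>) * (-(y - \<mu>)\<^sup>2 / (2 * \<sigma>\<^sup>2)))"
    unfolding nd powr_mult exp_powr_real by (simp add: mult_exp_exp mult.commute mult.left_commute)
  also have "C powr \<alpha> * C powr (1 - \<alpha>) = C" using C by (simp flip: powr_add)
  also have "\<alpha> * (-(y - 0)\<^sup>2 / (2 * \<sigma>\<^sup>2)) + (1 - \<alpha>) * (-(y - \<mu>)\<^sup>2 / (2 * \<sigma>\<^sup>2))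
       = \<alpha> * (\<alpha> - 1) * \<mu>\<^sup>2 / (2 * \<sigma>\<^sup>2) + (-(y - (1 - \<alpha>) * \<mu>)\<^sup>2 / (2 * \<sigma>\<^sup>2))"
    using assms by (simp add: field_simps power2_eq_square)
  finally show ?thesis by (simp add: nd flip: exp_add)
qed

lemma ln_jensen2:
  fixes a b w :: real
  assumes "a > 0" "b > 0" "0 \<le> w" "w \<le> 1"
  shows "w * ln a + (1 - w) * ln b \<le> ln (w * a + (1 - w) * b)"
proof -
  define M where "M = w * a + (1 - w) * b"
  have M: "M > 0" using assms unfolding M_def
    by (cases "w = 0") (auto intro: add_pos_nonneg)
  have "ln (a / M) \<le> a / M - 1" using assms M by (intro ln_le_minus_one) simp
  moreover have "ln (b / M) \<le> b / M - 1" using assms M by (intro ln_le_minus_one) simp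
  ultimately have "w * ln (a / M) + (1 - w) * ln (b / M) \<le> w * (a / M - 1) + (1 - w) * (b / M - 1)"
    using assms by (intro add_mono mult_left_mono) auto
  also have "\<dots> = 0" using M by (simp add: M_def field_simps)
  finally have "w * ln (a / M) + (1 - w) * ln (b / M) \<le> 0" .
  moreover have "w * ln (a / M) + (1 - w) * ln (b / M) = w * ln a + (1 - w) * ln b - ln M"
    using assms M by (simp add: ln_div algebra_simps)
  ultimately show ?thesis by (simp add: M_def)
qed

lemma two_renyi_bound:
  fixes p q K :: real
  assumes p: "0 < p" "p < 1" and q: "0 < q" "q < 1" and K: "K \<ge> 0"
    and H: "\<And>\<alpha>. \<alpha> > 1 \<Longrightarrow> p powr \<alpha> * q powr (1 - \<alpha>) + (1 - p) powr \<alpha> * (1 - q) powr (1 - \<alpha>)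
                 \<le> exp (\<alpha> * (\<alpha> - 1) * K)"
    and a: "\<alpha> \<ge> 1"
  shows "two_renyi \<alpha> p q \<le> \<alpha> * K"
proof -
  define S where "S \<alpha> = q * (p / q) powr \<alpha> + (1 - q) * ((1 - p) / (1 - q)) powr \<alpha>" for \<alpha>
  have S_eq: "S \<alpha> = p powr \<alpha> * q powr (1 - \<alpha>) + (1 - p) powr \<alpha> * (1 - q) powr (1 - \<alpha>)" for \<alpha>
    using p q by (simp add: S_def powr_divide powr_diff field_simps)
  have Spos: "S \<alpha> > 0" for \<alpha> using p q by (simp add: S_def add_pos_pos)
  have big: "1 / (\<alpha> - 1) * ln (S \<alpha>) \<le> \<alpha> * K" if "\<alpha> > 1" for \<alpha>
  proof -
    have "ln (S \<alpha>) \<le> ln (exp (\<alpha> * (\<alpha> - 1) * K))"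
      using H[OF that] S_eq Spos by (subst ln_le_cancel_iff) auto
    hence "ln (S \<alpha>) \<le> \<alpha> * (\<alpha> - 1) * K" by simp
    hence "ln (S \<alpha>) / (\<alpha> - 1) \<le> \<alpha> * K" using that by (simp add: divide_le_eq mult.commute mult.left_commute)
    thus ?thesis by simp
  qed
  show ?thesis
  proof (cases "\<alpha> = 1")
    case False
    hence "\<alpha> > 1" using a by simp
    thus ?thesis using big[of \<alpha>] False unfolding two_renyi_def S_def by simp
  next
    case True
    define KL where "KL = p * ln (p / q) + (1 - p) * ln ((1 - p) / (1 - q))"
    have jensen: "KL \<le> 1 / (\<beta> - 1) * ln (S \<beta>)" if "\<beta> > 1" for \<beta>
    proof -
      let ?A = "(p / q) powr (\<beta> - 1)" and ?B = "((1 - p) / (1 - q)) powr (\<beta> - 1)"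
      have A: "?A > 0" and B: "?B > 0" using p q by auto
      have "p * ln ?A + (1 - p) * ln ?B \<le> ln (p * ?A + (1 - p) * ?B)"
        using ln_jensen2[OF A B, of p] p by simp
      moreover have "p * ln ?A + (1 - p) * ln ?B = (\<beta> - 1) * KL"
        using p q by (simp add: KL_def ln_powr algebra_simps)
      moreover have "p * ?A + (1 - p) * ?B = S \<beta>"
        using p q by (simp add: S_def powr_diff field_simps)
      ultimately have "(\<beta> - 1) * KL \<le> ln (S \<beta>)" by simp
      thus ?thesis using that by (simp add: field_simps)
    qed
    have "KL \<le> K"
    proof (rule field_le_epsilon)
      fix e :: real assume e: "e > 0"
      let ?\<beta> = "1 + e / (K + 1)"
      have b1: "?\<beta> > 1" using e K by simp
      have "KL \<le> ?\<beta> * K" using jensen[OF b1] big[OF b1] by simp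
      also have "\<dots> = K + e * (K / (K + 1))" using K by (simp add: field_simps)
      also have "\<dots> \<le> K + e * 1" using K e by (intro add_left_mono mult_left_mono) auto
      finally show "KL \<le> K + e" by simp
    qed
    thus ?thesis using True unfolding two_renyi_def KL_def by simp
  qed
qed

lemma gauss_prob: "\<sigma> > 0 \<Longrightarrow> prob_space (gauss_distr \<sigma>)"
  unfolding gauss_distr_def by (rule prob_space_normal_density)

lemma gauss_space: "space (gauss_distr \<sigma>) = UNIV" and gauss_sets: "sets (gauss_distr \<sigma>) = sets borel"
  unfolding gauss_distr_def by simp_all

lemma gauss_measure:
  assumes S: "S \<in> sets borel"
  shows "measure (gauss_distr \<sigma>) S = (\<integral>y. normal_density 0 \<sigma> y * indicator S y \<partial>lborel)"
proof -
  have "measure (gauss_distr \<sigma>) S = (\<integral>y. indicator S y \<partial>gauss_distr \<sigma>)"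
    by (simp add: gauss_space)
  also have "\<dots> = (\<integral>y. normal_density 0 \<sigma> y *\<^sub>R indicator S y \<partial>lborel)"
    unfolding gauss_distr_def using S by (intro integral_density) auto
  finally show ?thesis by simp
qed

lemma integrable_nd_ind: "\<sigma> > 0 \<Longrightarrow> S \<in> sets borel \<Longrightarrow> integrable lborel (\<lambda>y. normal_density \<mu> \<sigma> y * indicator S y)"
  by (rule integrable_real_mult_indicator) auto

lemma gauss_shift:
  "(\<integral>y. normal_density 0 \<sigma> y * indicator {..a'} y \<partial>lborel)
   = (\<integral>y. normal_density (a - a') \<sigma> y * indicator {..a} y \<partial>lborel)"
proof -
  have "(\<integral>y. normal_density 0 \<sigma> y * indicator {..a'} y \<partial>lborel)
      = (\<integral>y. normal_density 0 \<sigma> ((a' - a) + y) * indicator {..a'} ((a' - a) + y) \<partial>lborel)"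
    using lborel_integral_real_affine[of 1 "\<lambda>y. normal_density 0 \<sigma> y * indicator {..a'} y" "a' - a"] by simp
  also have "\<dots> = (\<integral>y. normal_density (a - a') \<sigma> y * indicator {..a} y \<partial>lborel)"
    by (intro Bochner_Integration.integral_cong refl)
       (auto simp: normal_density_def indicator_def power2_eq_square algebra_simps)
  finally show ?thesis .
qed

lemma gauss_pos:
  assumes "\<sigma> > 0" "S \<in> sets borel" "{x..x+1} \<subseteq> S"
  shows "measure (gauss_distr \<sigma>) S > 0"
proof -
  let ?f = "\<lambda>y. normal_density 0 \<sigma> y * indicator S y"
  have nn: "measure (gauss_distr \<sigma>) S \<ge> 0" by simp
  have "measure (gauss_distr \<sigma>) S \<noteq> 0"
  proof
    assume "measure (gauss_distr \<sigma>) S = 0"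
    hence "integral\<^sup>L lborel ?f = 0" using gauss_measure[OF assms(2)] by simp
    hence ae: "AE y in lborel. ?f y = 0"
      using integral_nonneg_eq_0_iff_AE[of lborel ?f] integrable_nd_ind[OF assms(1,2)] by simp
    have pos: "\<And>y. normal_density 0 \<sigma> y \<noteq> 0" using normal_density_pos[OF assms(1)] by (metis less_irrefl)
    from ae have "AE y in lborel. y \<notin> S"
      by eventually_elim (auto simp: indicator_def pos split: if_splits)
    hence "emeasure lborel S = 0"
      using AE_iff_measurable[of S lborel "\<lambda>y. y \<notin> S"] assms(2) by auto
    moreover have "emeasure lborel {x..x+1} \<le> emeasure lborel S"
      using assms by (intro emeasure_mono) auto
    ultimately show False by simp
  qed
  thus ?thesis using nn by linarith
qed

lemma region_holder:
  fixes u v :: "real \<Rightarrow> real" and R :: "real set" and \<alpha> :: real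
  assumes a: "\<alpha> > 1" and R: "R \<in> sets borel"
    and iu: "integrable lborel u" and iv: "integrable lborel v"
    and iw: "integrable lborel (\<lambda>y. u y powr \<alpha> * v y powr (1 - \<alpha>))"
    and u0: "\<And>y. u y \<ge> 0" and v0: "\<And>y. v y > 0"
    and U: "(\<integral>y. u y * indicator R y \<partial>lborel) > 0"
    and V: "(\<integral>y. v y * indicator R y \<partial>lborel) > 0"
  shows "(\<integral>y. u y * indicator R y \<partial>lborel) powr \<alpha> * (\<integral>y. v y * indicator R y \<partial>lborel) powr (1 - \<alpha>)
         \<le> (\<integral>y. u y powr \<alpha> * v y powr (1 - \<alpha>) * indicator R y \<partial>lborel)"
proof -
  define U where "U = (\<integral>y. u y * indicator R y \<partial>lborel)"
  define V where "V = (\<integral>y. v y * indicator R y \<partial>lborel)"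
  define r where "r = U / V"
  have Up: "U > 0" and Vp: "V > 0" using U V by (simp_all add: U_def V_def)
  have rp: "r > 0" using Up Vp by (simp add: r_def)
  have iuR: "integrable lborel (\<lambda>y. u y * indicator R y)" by (intro integrable_real_mult_indicator) (simp_all add: iu R)
  have ivR: "integrable lborel (\<lambda>y. v y * indicator R y)" by (intro integrable_real_mult_indicator) (simp_all add: iv R)
  have iwR: "integrable lborel (\<lambda>y. u y powr \<alpha> * v y powr (1 - \<alpha>) * indicator R y)"
    by (intro integrable_real_mult_indicator) (simp_all add: iw R)
  have "(\<integral>y. \<alpha> * r powr (\<alpha> - 1) * (u y * indicator R y) - (\<alpha> - 1) * r powr \<alpha> * (v y * indicator R y) \<partial>lborel)
      \<le> (\<integral>y. u y powr \<alpha> * v y powr (1 - \<alpha>) * indicator R y \<partial>lborel)"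
  proof (rule integral_mono)
    show "integrable lborel (\<lambda>y. \<alpha> * r powr (\<alpha> - 1) * (u y * indicator R y) - (\<alpha> - 1) * r powr \<alpha> * (v y * indicator R y))"
      using iuR ivR by auto
    show "integrable lborel (\<lambda>y. u y powr \<alpha> * v y powr (1 - \<alpha>) * indicator R y)" by (rule iwR)
    fix y
    show "\<alpha> * r powr (\<alpha> - 1) * (u y * indicator R y) - (\<alpha> - 1) * r powr \<alpha> * (v y * indicator R y)
          \<le> u y powr \<alpha> * v y powr (1 - \<alpha>) * indicator R y"
      using pointwise_tangent[OF a u0 v0 rp, of y y] by (simp add: indicator_def)
  qed
  also have "(\<integral>y. \<alpha> * r powr (\<alpha> - 1) * (u y * indicator R y) - (\<alpha> - 1) * r powr \<alpha> * (v y * indicator R y) \<partial>lborel)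
      = \<alpha> * r powr (\<alpha> - 1) * U - (\<alpha> - 1) * r powr \<alpha> * V"
    using iuR ivR by (simp add: U_def V_def)
  also have "\<alpha> * r powr (\<alpha> - 1) * U - (\<alpha> - 1) * r powr \<alpha> * V = U powr \<alpha> * V powr (1 - \<alpha>)"
  proof -
    have "r powr (\<alpha> - 1) * U = U powr \<alpha> * V powr (1 - \<alpha>)"
      using Up Vp by (simp add: r_def powr_divide powr_diff field_simps)
    moreover have "r powr \<alpha> * V = U powr \<alpha> * V powr (1 - \<alpha>)"
      using Up Vp by (simp add: r_def powr_divide powr_diff field_simps)
    ultimately show ?thesis by (simp add: algebra_simps)
  qed
  finally show ?thesis by (simp add: U_def V_def)
qed

lemma gauss_compl:
  assumes "\<sigma> > 0"
  shows "measure (gauss_distr \<sigma>) {a<..} = 1 - measure (gauss_distr \<sigma>) {..a}"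
proof -
  interpret prob_space "gauss_distr \<sigma>" using gauss_prob[OF assms] .
  have "measure (gauss_distr \<sigma>) (space (gauss_distr \<sigma>) - {..a}) = 1 - measure (gauss_distr \<sigma>) {..a}"
    by (rule prob_compl) (simp add: gauss_sets)
  moreover have "space (gauss_distr \<sigma>) - {..a} = {a<..}" by (auto simp: gauss_space)
  ultimately show ?thesis by simp
qed

lemma gauss_bern:
  fixes \<sigma> a a' \<alpha> :: real
  assumes s: "\<sigma> > 0" and d: "\<bar>a - a'\<bar> \<le> 1" and al: "\<alpha> \<ge> 1"
  shows "two_renyi \<alpha> (measure (gauss_distr \<sigma>) {..a}) (measure (gauss_distr \<sigma>) {..a'}) \<le> \<alpha> / (2 * \<sigma>\<^sup>2)"
proof -
  define \<mu> where "\<mu> = a - a'"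
  define u where "u = normal_density 0 \<sigma>"
  define v where "v = normal_density \<mu> \<sigma>"
  let ?N = "gauss_distr \<sigma>"
  define p where "p = measure ?N {..a}"
  define q where "q = measure ?N {..a'}"
  have p_eq: "p = (\<integral>y. u y * indicator {..a} y \<partial>lborel)"
    unfolding p_def u_def by (rule gauss_measure) simp
  have q_eq: "q = (\<integral>y. v y * indicator {..a} y \<partial>lborel)"
    unfolding q_def v_def \<mu>_def by (subst gauss_measure) (simp_all add: gauss_shift)
  have p1_eq: "1 - p = (\<integral>y. u y * indicator {a<..} y \<partial>lborel)"
    unfolding p_def u_def by (subst gauss_compl[OF s, symmetric]) (rule gauss_measure, simp)
  have q1_eq: "1 - q = (\<integral>y. v y * indicator {a<..} y \<partial>lborel)"
  proof -
    have "(\<integral>y. v y * indicator {a<..} y \<partial>lborel) = (\<integral>y. v y - v y * indicator {..a} y \<partial>lborel)"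
      by (intro Bochner_Integration.integral_cong) (auto simp: indicator_def)
    also have "\<dots> = (\<integral>y. v y \<partial>lborel) - (\<integral>y. v y * indicator {..a} y \<partial>lborel)"
      unfolding v_def using integrable_nd_ind[OF s, of "{..a}" \<mu>] s
      by (intro Bochner_Integration.integral_diff) auto
    also have "\<dots> = 1 - q" using s by (simp add: v_def q_eq[unfolded v_def])
    finally show ?thesis by simp
  qed
  have pp: "p > 0" unfolding p_def using gauss_pos[OF s, of "{..a}" "a - 1"] by simp
  have qp: "q > 0" unfolding q_def using gauss_pos[OF s, of "{..a'}" "a' - 1"] by simp
  have pp1: "1 - p > 0" unfolding p_def using gauss_pos[OF s, of "{a<..}" "a + 1"] gauss_compl[OF s, of a] by (simp add: subset_eq)
  have qp1: "1 - q > 0" unfolding q_def using gauss_pos[OF s, of "{a'<..}" "a' + 1"] gauss_compl[OF s, of a'] by (simp add: subset_eq)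
  define K where "K = \<mu>\<^sup>2 / (2 * \<sigma>\<^sup>2)"
  have K0: "K \<ge> 0" by (simp add: K_def)
  have H: "p powr \<beta> * q powr (1 - \<beta>) + (1 - p) powr \<beta> * (1 - q) powr (1 - \<beta>) \<le> exp (\<beta> * (\<beta> - 1) * K)"
    if b: "\<beta> > 1" for \<beta>
  proof -
    let ?w = "\<lambda>y. u y powr \<beta> * v y powr (1 - \<beta>)"
    have w_eq: "?w y = exp (\<beta> * (\<beta> - 1) * \<mu>\<^sup>2 / (2 * \<sigma>\<^sup>2)) * normal_density ((1 - \<beta>) * \<mu>) \<sigma> y" for y
      unfolding u_def v_def by (rule gauss_prod[OF s])
    have iw: "integrable lborel ?w" unfolding w_eq using s by simp
    have iu: "integrable lborel u" and iv: "integrable lborel v" using s by (simp_all add: u_def v_def)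
    have u0: "u y \<ge> 0" and v0: "v y > 0" for y using s by (simp_all add: u_def v_def normal_density_pos)
    have h1: "p powr \<beta> * q powr (1 - \<beta>) \<le> (\<integral>y. ?w y * indicator {..a} y \<partial>lborel)"
      unfolding p_eq q_eq using pp qp unfolding p_eq q_eq
      by (intro region_holder[OF b _ iu iv iw u0 v0]) auto
    have h2: "(1 - p) powr \<beta> * (1 - q) powr (1 - \<beta>) \<le> (\<integral>y. ?w y * indicator {a<..} y \<partial>lborel)"
      unfolding p1_eq q1_eq using pp1 qp1 unfolding p1_eq q1_eq
      by (intro region_holder[OF b _ iu iv iw u0 v0]) auto
    have "(\<integral>y. ?w y * indicator {..a} y \<partial>lborel) + (\<integral>y. ?w y * indicator {a<..} y \<partial>lborel)
        = (\<integral>y. ?w y * indicator {..a} y + ?w y * indicator {a<..} y \<partial>lborel)"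
      using iw by (intro Bochner_Integration.integral_add[symmetric] integrable_real_mult_indicator) auto
    also have "\<dots> = (\<integral>y. ?w y \<partial>lborel)"
      by (intro Bochner_Integration.integral_cong) (auto simp: indicator_def)
    also have "\<dots> = exp (\<beta> * (\<beta> - 1) * K)"
      unfolding w_eq using s by (simp add: K_def)
    finally show ?thesis using h1 h2 by simp
  qed
  have "two_renyi \<alpha> p q \<le> \<alpha> * K"
    by (rule two_renyi_bound[OF pp _ qp _ K0 H al]) (use pp1 qp1 in simp_all)
  also have "\<alpha> * K \<le> \<alpha> * (1 / (2 * \<sigma>\<^sup>2))"
  proof -
    have "\<mu>\<^sup>2 \<le> 1" using d unfolding \<mu>_def by (simp add: abs_le_square_iff[symmetric] abs_square_le_1)
    hence "K \<le> 1 / (2 * \<sigma>\<^sup>2)" unfolding K_def using s by (simp add: divide_right_mono)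
    thus ?thesis using al by (intro mult_left_mono) auto
  qed
  finally show ?thesis by (simp add: p_def q_def)
qed

lemma gauss_tail:
  fixes \<sigma> c :: real
  assumes s: "\<sigma> > 0" and c: "c \<ge> 0"
  shows "measure (gauss_distr \<sigma>) {c<..} \<le> exp (- c\<^sup>2 / (2 * \<sigma>\<^sup>2))"
proof -
  define l where "l = c / \<sigma>\<^sup>2"
  have l0: "l \<ge> 0" using c by (simp add: l_def)
  have eq: "normal_density 0 \<sigma> y * exp (l * (y - c)) = exp (- l * c + l\<^sup>2 * \<sigma>\<^sup>2 / 2) * normal_density (l * \<sigma>\<^sup>2) \<sigma> y" for y
  proof -
    have "- (y - 0)\<^sup>2 / (2 * \<sigma>\<^sup>2) + l * (y - c) = - l * c + l\<^sup>2 * \<sigma>\<^sup>2 / 2 + (- (y - l * \<sigma>\<^sup>2)\<^sup>2 / (2 * \<sigma>\<^sup>2))"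
      using s by (simp add: field_simps power2_eq_square)
    thus ?thesis unfolding normal_density_def by (simp add: mult_exp_exp[symmetric] exp_add[symmetric] mult_ac)
  qed
  have "measure (gauss_distr \<sigma>) {c<..} = (\<integral>y. normal_density 0 \<sigma> y * indicator {c<..} y \<partial>lborel)"
    by (rule gauss_measure) simp
  also have "\<dots> \<le> (\<integral>y. normal_density 0 \<sigma> y * exp (l * (y - c)) \<partial>lborel)"
  proof (rule integral_mono)
    show "integrable lborel (\<lambda>y. normal_density 0 \<sigma> y * indicator {c<..} y)"
      using integrable_nd_ind[OF s] by simp
    show "integrable lborel (\<lambda>y. normal_density 0 \<sigma> y * exp (l * (y - c)))"
      unfolding eq using s by simp
    fix y
    have "indicator {c<..} y \<le> exp (l * (y - c))"
      using l0 by (auto simp: indicator_def)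
    thus "normal_density 0 \<sigma> y * indicator {c<..} y \<le> normal_density 0 \<sigma> y * exp (l * (y - c))"
      by (intro mult_left_mono) auto
  qed
  also have "\<dots> = exp (- l * c + l\<^sup>2 * \<sigma>\<^sup>2 / 2)" unfolding eq using s by simp
  also have "- l * c + l\<^sup>2 * \<sigma>\<^sup>2 / 2 = - c\<^sup>2 / (2 * \<sigma>\<^sup>2)"
    using s by (simp add: l_def field_simps power2_eq_square)
  finally show ?thesis .
qed

lemma laplace_density_meas[measurable]: "laplace_density b \<in> borel_measurable borel"
  unfolding laplace_density_def[abs_def] by measurable

lemma lap_space: "space (laplace_distr b) = UNIV" and lap_sets: "sets (laplace_distr b) = sets borel"
  unfolding laplace_distr_def by simp_all

lemma lap_emeasure:
  "S \<in> sets borel \<Longrightarrow> emeasure (laplace_distr b) S = (\<integral>\<^sup>+x. ennreal (laplace_density b x) * indicator S x \<partial>lborel)"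
  unfolding laplace_distr_def by (rule emeasure_density) auto

lemma lap_upper:
  fixes b c :: real
  assumes b: "b > 0" and c: "c \<ge> 0"
  shows "emeasure (laplace_distr b) {c..} = ennreal (exp (- c / b) / 2)"
proof -
  have "emeasure (laplace_distr b) {c..} = (\<integral>\<^sup>+x. ennreal (laplace_density b x) * indicator {c..} x \<partial>lborel)"
    by (rule lap_emeasure) simp
  also have "\<dots> = ennreal (0 - (- exp (- c / b) / 2))"
  proof (rule nn_integral_FTC_atLeast)
    show "laplace_density b \<in> borel_measurable borel" by simp
    fix x :: real assume x: "c \<le> x"
    hence "laplace_density b x = exp (- x / b) / (2 * b)" using c by (simp add: laplace_density_def)
    moreover have "((\<lambda>x. - exp (- x / b) / 2) has_real_derivative exp (- x / b) / (2 * b)) (at x)"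
      using b by (auto intro!: derivative_eq_intros simp: field_simps)
    ultimately show "((\<lambda>x. - exp (- x / b) / 2) has_real_derivative laplace_density b x) (at x)" by simp
    show "0 \<le> laplace_density b x" using b by (simp add: laplace_density_def)
  next
    have "((\<lambda>x. exp (- x / b)) \<longlongrightarrow> 0) at_top"
      using b by real_asymp
    hence "((\<lambda>x. - exp (- x / b) / 2) \<longlongrightarrow> - 0 / 2) at_top"
      by (intro tendsto_intros) simp_all
    thus "((\<lambda>x. - exp (- x / b) / 2) \<longlongrightarrow> 0) at_top" by simp
  qed
  finally show ?thesis by simp
qed

lemma lap_lower:
  fixes b :: real
  assumes b: "b > 0"
  shows "emeasure (laplace_distr b) {..0} = ennreal (1 / 2)"
proof -
  have "emeasure (laplace_distr b) {..0} = (\<integral>\<^sup>+x. ennreal (laplace_density b x) * indicator {..0} x \<partial>lborel)"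
    by (rule lap_emeasure) simp
  also have "\<dots> = ennreal \<bar>- 1\<bar> * (\<integral>\<^sup>+x. ennreal (laplace_density b (0 + (-1) * x)) * indicator {..0} (0 + (-1) * x) \<partial>lborel)"
    by (rule nn_integral_real_affine) auto
  also have "\<dots> = (\<integral>\<^sup>+x. ennreal (laplace_density b x) * indicator {0..} x \<partial>lborel)"
    by (auto intro!: nn_integral_cong simp: laplace_density_def indicator_def)
  also have "\<dots> = emeasure (laplace_distr b) {0..}"
    by (rule lap_emeasure[symmetric]) simp
  also have "\<dots> = ennreal (1 / 2)" using lap_upper[OF b, of 0] by simp
  finally show ?thesis .
qed

lemma lap_finite:
  fixes b :: real
  assumes b: "b > 0"
  shows "finite_measure (laplace_distr b)"
proof
  have "space (laplace_distr b) = {..0} \<union> {0..}" by (auto simp: lap_space)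
  hence "emeasure (laplace_distr b) (space (laplace_distr b)) \<le> emeasure (laplace_distr b) {..0} + emeasure (laplace_distr b) {0..}"
    by (simp add: emeasure_subadditive lap_sets)
  also have "\<dots> = ennreal (1/2) + ennreal (1/2)" using lap_upper[OF b, of 0] lap_lower[OF b] by simp
  finally show "emeasure (laplace_distr b) (space (laplace_distr b)) \<noteq> \<infinity>"
    by (auto simp: top_unique simp flip: ennreal_plus)
qed

lemma lap_tail:
  fixes b c :: real
  assumes b: "b > 0" and c: "c \<ge> 0"
  shows "measure (laplace_distr b) {c<..} \<le> exp (- c / b) / 2"
proof -
  interpret finite_measure "laplace_distr b" by (rule lap_finite[OF b])
  have "emeasure (laplace_distr b) {c<..} \<le> emeasure (laplace_distr b) {c..}"
    by (intro emeasure_mono) (auto simp: lap_sets)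
  also have "\<dots> = ennreal (exp (- c / b) / 2)" by (rule lap_upper[OF b c])
  finally show ?thesis by (simp add: emeasure_eq_measure ennreal_le_iff)
qed

lemma lap_shift:
  fixes b d :: real and S :: "real set"
  assumes b: "b > 0" and d: "\<bar>d\<bar> \<le> 1" and S: "S \<in> sets borel"
  shows "measure (laplace_distr b) S \<le> exp (1 / b) * measure (laplace_distr b) ((\<lambda>y. y - d) -` S)"
proof -
  interpret finite_measure "laplace_distr b" by (rule lap_finite[OF b])
  note S[measurable]
  let ?f = "laplace_density b"
  have "(\<lambda>y. y - d) -` S \<inter> space borel \<in> sets borel"
    by (rule measurable_sets[OF _ S]) measurable
  hence S': "(\<lambda>y. y - d) -` S \<in> sets borel" by simp
  have pw: "?f x \<le> exp (1 / b) * ?f (x + d)" for x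
  proof -
    have "- \<bar>x\<bar> / b \<le> 1 / b + - \<bar>x + d\<bar> / b"
      using b d by (simp add: field_simps)
    hence "exp (- \<bar>x\<bar> / b) \<le> exp (1 / b) * exp (- \<bar>x + d\<bar> / b)"
      by (simp add: mult_exp_exp)
    thus ?thesis using b by (simp add: laplace_density_def divide_right_mono)
  qed
  have pw': "ennreal (?f x) \<le> ennreal (exp (1 / b)) * ennreal (?f (x + d))" for x
  proof -
    have "?f (x + d) \<ge> 0" using b by (simp add: laplace_density_def)
    hence "ennreal (exp (1 / b)) * ennreal (?f (x + d)) = ennreal (exp (1 / b) * ?f (x + d))"
      by (simp add: ennreal_mult)
    thus ?thesis using pw[of x] by (simp add: ennreal_leI)
  qed
  have "emeasure (laplace_distr b) S = (\<integral>\<^sup>+x. ennreal (?f x) * indicator S x \<partial>lborel)"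
    by (rule lap_emeasure[OF S])
  also have "\<dots> \<le> (\<integral>\<^sup>+x. ennreal (exp (1 / b)) * (ennreal (?f (d + x)) * indicator S x) \<partial>lborel)"
    by (intro nn_integral_mono) (auto simp: indicator_def pw' add.commute split: if_splits)
  also have "\<dots> = ennreal (exp (1 / b)) * (\<integral>\<^sup>+x. ennreal (?f (d + x)) * indicator S x \<partial>lborel)"
    using S by (intro nn_integral_cmult) measurable
  also have "(\<integral>\<^sup>+x. ennreal (?f (d + x)) * indicator S x \<partial>lborel)
      = (\<integral>\<^sup>+x. ennreal (?f x) * indicator ((\<lambda>y. y - d) -` S) x \<partial>lborel)"
  proof -
    have "(\<integral>\<^sup>+x. ennreal (?f x) * indicator ((\<lambda>y. y - d) -` S) x \<partial>lborel)
        = ennreal \<bar>1\<bar> * (\<integral>\<^sup>+x. ennreal (?f (d + 1 * x)) * indicator ((\<lambda>y. y - d) -` S) (d + 1 * x) \<partial>lborel)"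
      using S' by (intro nn_integral_real_affine) measurable
    also have "\<dots> = (\<integral>\<^sup>+x. ennreal (?f (d + x)) * indicator S x \<partial>lborel)"
      by (simp add: indicator_def)
    finally show ?thesis by simp
  qed
  also have "\<dots> = emeasure (laplace_distr b) ((\<lambda>y. y - d) -` S)"
    by (rule lap_emeasure[OF S', symmetric])
  finally have "ennreal (measure (laplace_distr b) S) \<le> ennreal (exp (1 / b)) * ennreal (measure (laplace_distr b) ((\<lambda>y. y - d) -` S))"
    by (simp add: emeasure_eq_measure)
  thus ?thesis by (simp add: ennreal_mult[symmetric] ennreal_le_iff)
qed

lemma two_point_degenerate:
  fixes M1 M2 :: "'a measure" and out1 out2 :: "'a \<Rightarrow> 'o"
  assumes P1: "prob_space M1" and P2: "prob_space M2"
    and out1: "\<And>y. y \<in> space M1 \<Longrightarrow> out1 y = (if y \<in> A1 then o1 else o2)"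
    and out2: "\<And>y. y \<in> space M2 \<Longrightarrow> out2 y = (if y \<in> A2 then o1 else o2')"
    and A1: "A1 \<in> sets M1" and A2: "A2 \<in> sets M2" and ne: "o1 \<noteq> o2" "o1 \<noteq> o2'"
    and m1: "measure M1 A1 = 1" and m2: "measure M2 A2 = 1"
  shows "renyi_div \<alpha> (distr M1 (count_space UNIV) out1) (distr M2 (count_space UNIV) out2) = 0"
proof -
  let ?P = "distr M1 (count_space UNIV) out1" and ?Q = "distr M2 (count_space UNIV) out2"
  have sP: "measure ?P {y} = (if y = o1 then 1 else 0)" for y
    using two_point_singleton[OF P1 out1 A1 ne(1), of y] m1 by auto
  have sQ: "measure ?Q {y} = (if y = o1 then 1 else 0)" for y
    using two_point_singleton[OF P2 out2 A2 ne(2), of y] m2 by auto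
  have nz: "\<not> (\<exists>y. measure ?Q {y} = 0 \<and> measure ?P {y} \<noteq> 0)" by (auto simp: sP sQ)
  show ?thesis
  proof (cases "\<alpha> = 1")
    case True
    have "(\<integral>y. ln (measure ?P {y} / measure ?Q {y}) \<partial>?P) = (\<integral>y. 0 \<partial>?P)"
      by (intro Bochner_Integration.integral_cong) (auto simp: sP sQ)
    thus ?thesis using nz True unfolding renyi_div_def by (simp add: zero_ereal_def)
  next
    case False
    have "(\<integral>y. (measure ?P {y} / measure ?Q {y}) powr \<alpha> \<partial>?Q) = (\<integral>y. (if y = o1 then 1 else 0) \<partial>?Q)"
      by (intro Bochner_Integration.integral_cong) (auto simp: sP sQ)
    also have "\<dots> = (if o1 = o1 then 1 else 0) * measure M2 A2 + (if o2' = o1 then 1 else 0) * (1 - measure M2 A2)"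
      by (rule two_point_integral[OF P2 out2 A2])
    also have "\<dots> = 1" using m2 ne by simp
    finally show ?thesis using nz False unfolding renyi_div_def by (simp add: zero_ereal_def)
  qed
qed

lemma lap_out_eq:
  "ptr_laplace_out m k \<epsilon> \<delta> D y = (if y \<in> {..1 + ln (1 / \<delta>) / \<epsilon> - gap m k D} then None else Some (topk m k D))"
  unfolding ptr_laplace_out_def by auto

lemma gauss_out_eq:
  "ptr_gauss_out m k \<sigma> \<delta> D y = (if y \<in> {..1 + \<sigma> * sqrt (2 * ln (1 / \<delta>)) - max 1 (gap m k D)} then None else Some (topk m k D))"
  unfolding ptr_gauss_out_def by auto

lemma lap_dp:
  fixes m k :: nat and \<delta> \<epsilon> :: real
  assumes k1: "1 \<le> k" and km: "k \<le> m - 1" and d0: "0 < \<delta>" and d1: "\<delta> < 1" and e: "\<epsilon> > 0"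
  shows "is_dp m (laplace_distr (1 / \<epsilon>)) (ptr_laplace_out m k \<epsilon> \<delta>) \<epsilon> \<delta>"
  unfolding is_dp_def
proof (intro allI impI)
  fix D D' :: "nat set multiset" and A :: "nat set option set"
  assume H: "valid_dataset m D \<and> valid_dataset m D' \<and> neighboring D D'"
  have k1m: "k + 1 \<le> m" using k1 km by simp
  define b where "b = 1 / \<epsilon>"
  have b: "b > 0" using e by (simp add: b_def)
  let ?N = "laplace_distr b"
  interpret finite_measure ?N by (rule lap_finite[OF b])
  define c where "c = ln (1 / \<delta>) / \<epsilon>"
  have lnpos: "ln (1 / \<delta>) > 0" using d0 d1 by simp
  have c0: "c \<ge> 0" using lnpos e by (simp add: c_def)
  define a where "a = 1 + c - gap m k D"
  define a' where "a' = 1 + c - gap m k D'"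
  let ?o = "ptr_laplace_out m k \<epsilon> \<delta> D" and ?o' = "ptr_laplace_out m k \<epsilon> \<delta> D'"
  have o_eq: "?o y = (if y \<in> {..a} then None else Some (topk m k D))" for y
    using lap_out_eq[of m k \<epsilon> \<delta> D y] by (simp add: a_def c_def)
  have o'_eq: "?o' y = (if y \<in> {..a'} then None else Some (topk m k D'))" for y
    using lap_out_eq[of m k \<epsilon> \<delta> D' y] by (simp add: a'_def c_def)
  have ms: "?o \<in> measurable ?N (count_space UNIV)"
    by (rule two_point_meas[of _ _ "{..a}"]) (simp_all add: o_eq lap_sets)
  have ms': "?o' \<in> measurable ?N (count_space UNIV)"
    by (rule two_point_meas[of _ _ "{..a'}"]) (simp_all add: o'_eq lap_sets)
  have md: "measure (mech_distr ?N (ptr_laplace_out m k \<epsilon> \<delta>) D) A = measure ?N (?o -` A)"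
    unfolding mech_distr_def by (subst measure_distr[OF ms]) (simp_all add: lap_space)
  have md': "measure (mech_distr ?N (ptr_laplace_out m k \<epsilon> \<delta>) D') A = measure ?N (?o' -` A)"
    unfolding mech_distr_def by (subst measure_distr[OF ms']) (simp_all add: lap_space)
  have pre_meas: "?o -` A \<in> sets borel" "?o' -` A \<in> sets borel"
    using measurable_sets[OF ms, of A] measurable_sets[OF ms', of A] by (simp_all add: lap_space lap_sets)
  have eb: "exp (1 / b) = exp \<epsilon>" by (simp add: b_def)
  have sens: "\<bar>a' - a\<bar> \<le> 1"
    using gap_sens[OF k1 k1m, of D D'] H by (simp add: a_def a'_def abs_minus_commute)
  have main: "measure ?N (?o -` A) \<le> exp \<epsilon> * measure ?N (?o' -` A) + \<delta>"
  proof (cases "topk m k D = topk m k D'")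
    case True
    have "(\<lambda>y. y - (a' - a)) -` (?o -` A) = ?o' -` A"
      by (auto simp: o_eq o'_eq True split: if_splits)
    hence "measure ?N (?o -` A) \<le> exp \<epsilon> * measure ?N (?o' -` A)"
      using lap_shift[OF b sens pre_meas(1)] eb by simp
    thus ?thesis using d0 by simp
  next
    case False
    have g1: "gap m k D \<le> 1" using topk_diff_gap[OF k1 k1m _ False] H by simp
    define X where "X = (if None \<in> A then {..a} else {})"
    have sub: "?o -` A \<subseteq> X \<union> {a<..}" by (auto simp: o_eq X_def split: if_splits)
    have "measure ?N (?o -` A) \<le> measure ?N (X \<union> {a<..})"
      using sub by (intro finite_measure_mono) (auto simp: lap_sets X_def)
    also have "\<dots> \<le> measure ?N X + measure ?N {a<..}"
      by (intro measure_Un_le) (auto simp: lap_sets X_def)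
    also have "measure ?N X \<le> exp \<epsilon> * measure ?N (?o' -` A)"
    proof (cases "None \<in> A")
      case True
      have "measure ?N {..a} \<le> exp \<epsilon> * measure ?N ((\<lambda>y. y - (a' - a)) -` {..a})"
        using lap_shift[OF b sens, of "{..a}"] eb by simp
      also have "(\<lambda>y. y - (a' - a)) -` {..a} = {..a'}" by auto
      also have "measure ?N {..a'} \<le> measure ?N (?o' -` A)"
        using True pre_meas(2) by (intro finite_measure_mono) (auto simp: o'_eq lap_sets)
      finally show ?thesis using True by (simp add: X_def mult_left_mono)
    next
      case False thus ?thesis by (simp add: X_def)
    qed
    also have "measure ?N {a<..} \<le> \<delta>"
    proof -
      have "measure ?N {a<..} \<le> measure ?N {c<..}"
        using g1 by (intro finite_measure_mono) (auto simp: lap_sets a_def)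
      also have "\<dots> \<le> exp (- c / b) / 2" by (rule lap_tail[OF b c0])
      also have "- c / b = ln \<delta>" using e d0 by (simp add: b_def c_def ln_div)
      also have "exp (ln \<delta>) / 2 \<le> \<delta>" using d0 by simp
      finally show ?thesis .
    qed
    finally show ?thesis by simp
  qed
  show "measure (mech_distr ?N (ptr_laplace_out m k \<epsilon> \<delta>) D) A \<le> exp \<epsilon> * measure (mech_distr ?N (ptr_laplace_out m k \<epsilon> \<delta>) D') A + \<delta>"
    using main md md' unfolding b_def by simp
qed

lemma cond_on_full:
  assumes P: "prob_space N"
  shows "cond_on N (space N) = N"
proof -
  interpret prob_space N by fact
  have "cond_on N (space N) = density N (\<lambda>_. 1)"
    unfolding cond_on_def by (intro density_cong) (auto simp: emeasure_space_1)
  thus ?thesis by (simp add: density_1)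
qed

lemma cond_on_one:
  assumes P: "prob_space N" and E: "E \<in> sets N" and pos: "measure N E > 0"
    and X: "X \<in> sets N" and EX: "E \<subseteq> X"
  shows "emeasure (cond_on N E) X = 1"
proof -
  interpret prob_space N by fact
  define pE where "pE = measure N E"
  have mE: "emeasure N E = ennreal pE" by (simp add: pE_def emeasure_eq_measure)
  have inv: "1 / ennreal pE = ennreal (1 / pE)" using divide_ennreal[of 1 pE] pos by (simp add: pE_def)
  have "emeasure (cond_on N E) X = (\<integral>\<^sup>+x. indicator E x / emeasure N E * indicator X x \<partial>N)"
    unfolding cond_on_def using E X by (intro emeasure_density) auto
  also have "\<dots> = (\<integral>\<^sup>+x. indicator E x * ennreal (1 / pE) \<partial>N)"
    using EX pos by (intro nn_integral_cong) (auto simp: indicator_def mE inv)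
  also have "\<dots> = emeasure N E * ennreal (1 / pE)"
    using E by (subst nn_integral_multc) auto
  also have "\<dots> = 1" using pos by (simp add: mE pE_def ennreal_mult[symmetric])
  finally show ?thesis .
qed

lemma cond_on_prob:
  assumes P: "prob_space N" and E: "E \<in> sets N" and pos: "measure N E > 0"
  shows "prob_space (cond_on N E)"
proof (rule prob_spaceI)
  have "emeasure (cond_on N E) (space N) = 1"
    using cond_on_one[OF P E pos _ sets.sets_into_space[OF E]] by simp
  thus "emeasure (cond_on N E) (space (cond_on N E)) = 1" by (simp add: cond_on_def)
qed

lemma gauss_rdp:
  fixes m k :: nat and \<delta> \<sigma> :: real
  assumes k1: "1 \<le> k" and km: "k \<le> m - 1" and d0: "0 < \<delta>" and d1: "\<delta> < 1" and s: "\<sigma> > 0"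
  shows "approx_rdp m (gauss_distr \<sigma>) (ptr_gauss_out m k \<sigma> \<delta>) \<delta> (\<lambda>\<alpha>. \<alpha> / (2 * \<sigma> ^ 2))"
  unfolding approx_rdp_def
proof (intro allI impI)
  fix D D' :: "nat set multiset"
  assume H: "valid_dataset m D \<and> valid_dataset m D' \<and> neighboring D D'"
  have k1m: "k + 1 \<le> m" using k1 km by simp
  let ?N = "gauss_distr \<sigma>"
  have PN: "prob_space ?N" by (rule gauss_prob[OF s])
  interpret prob_space ?N by (rule PN)
  define c where "c = \<sigma> * sqrt (2 * ln (1 / \<delta>))"
  have lnpos: "ln (1 / \<delta>) > 0" using d0 d1 by simp
  have c0: "c \<ge> 0" using lnpos s by (simp add: c_def)
  define a where "a = 1 + c - max 1 (gap m k D)"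
  define a' where "a' = 1 + c - max 1 (gap m k D')"
  let ?o = "ptr_gauss_out m k \<sigma> \<delta> D" and ?o' = "ptr_gauss_out m k \<sigma> \<delta> D'"
  have o_eq: "?o y = (if y \<in> {..a} then None else Some (topk m k D))" for y
    using gauss_out_eq[of m k \<sigma> \<delta> D y] by (simp add: a_def c_def)
  have o'_eq: "?o' y = (if y \<in> {..a'} then None else Some (topk m k D'))" for y
    using gauss_out_eq[of m k \<sigma> \<delta> D' y] by (simp add: a'_def c_def)
  show "\<exists>E E'. E \<in> sets ?N \<and> E' \<in> sets ?N \<and> 1 - \<delta> \<le> measure ?N E \<and> 1 - \<delta> \<le> measure ?N E' \<and>
      (\<forall>\<alpha>\<ge>1. renyi_div \<alpha> (mech_distr (cond_on ?N E) (ptr_gauss_out m k \<sigma> \<delta>) D)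
                 (mech_distr (cond_on ?N E') (ptr_gauss_out m k \<sigma> \<delta>) D') \<le> ereal (\<alpha> / (2 * \<sigma> ^ 2)))"
  proof (cases "topk m k D = topk m k D'")
    case True
    have cN: "cond_on ?N UNIV = ?N" using cond_on_full[OF PN] by (simp add: gauss_space)
    have sens: "\<bar>a - a'\<bar> \<le> 1"
    proof -
      have "\<bar>gap m k D - gap m k D'\<bar> \<le> 1" using gap_sens[OF k1 k1m, of D D'] H by simp
      thus ?thesis unfolding a_def a'_def by (simp add: max_def abs_le_iff)
    qed
    have qp: "measure ?N {..a'} > 0" using gauss_pos[OF s, of "{..a'}" "a' - 1"] by simp
    have qp1: "measure ?N {..a'} < 1"
      using gauss_pos[OF s, of "{a'<..}" "a' + 1"] gauss_compl[OF s, of a'] by (simp add: subset_eq)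
    have "renyi_div \<alpha> (mech_distr ?N (ptr_gauss_out m k \<sigma> \<delta>) D) (mech_distr ?N (ptr_gauss_out m k \<sigma> \<delta>) D')
          \<le> ereal (\<alpha> / (2 * \<sigma> ^ 2))" if al: "\<alpha> \<ge> 1" for \<alpha>
    proof -
      have "renyi_div \<alpha> (mech_distr ?N (ptr_gauss_out m k \<sigma> \<delta>) D) (mech_distr ?N (ptr_gauss_out m k \<sigma> \<delta>) D')
          = ereal (two_renyi \<alpha> (measure ?N {..a}) (measure ?N {..a'}))"
        unfolding mech_distr_def
        by (rule two_point_renyi[OF PN PN, where ?o1.0 = None and ?o2.0 = "Some (topk m k D)"])
           (use qp qp1 in \<open>simp_all add: o_eq o'_eq True gauss_sets\<close>)
      also have "\<dots> \<le> ereal (\<alpha> / (2 * \<sigma> ^ 2))"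
        using gauss_bern[OF s sens al] by simp
      finally show ?thesis .
    qed
    moreover have "measure ?N UNIV = 1" using prob_space by (simp add: gauss_space)
    ultimately show ?thesis using cN by (intro exI[of _ UNIV]) (simp add: gauss_sets d0 less_imp_le)
  next
    case False
    have g: "gap m k D \<le> 1 \<and> gap m k D' \<le> 1" using topk_diff_gap[OF k1 k1m _ False] H by simp
    hence ac: "a = c" "a' = c" by (simp_all add: a_def a'_def)
    have Emeas: "{..c} \<in> sets ?N" by (simp add: gauss_sets)
    have Epos: "measure ?N {..c} > 0" using gauss_pos[OF s, of "{..c}" "c - 1"] by simp
    have Ebig: "measure ?N {..c} \<ge> 1 - \<delta>"
    proof -
      have "measure ?N {c<..} \<le> exp (- c\<^sup>2 / (2 * \<sigma>\<^sup>2))" by (rule gauss_tail[OF s c0])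
      also have "- c\<^sup>2 / (2 * \<sigma>\<^sup>2) = ln \<delta>"
        using s lnpos d0 by (simp add: c_def power_mult_distrib ln_div)
      also have "exp (ln \<delta>) = \<delta>" using d0 by simp
      finally show ?thesis using gauss_compl[OF s, of c] by simp
    qed
    let ?M = "cond_on ?N {..c}"
    have PM: "prob_space ?M" by (rule cond_on_prob[OF PN Emeas Epos])
    have m1: "measure ?M {..c} = 1"
      using cond_on_one[OF PN Emeas Epos Emeas] by (simp add: measure_def)
    have sM: "space ?M = UNIV" "sets ?M = sets borel" by (simp_all add: cond_on_def gauss_space gauss_sets)
    have "renyi_div \<alpha> (mech_distr ?M (ptr_gauss_out m k \<sigma> \<delta>) D) (mech_distr ?M (ptr_gauss_out m k \<sigma> \<delta>) D')
          \<le> ereal (\<alpha> / (2 * \<sigma> ^ 2))" if al: "\<alpha> \<ge> 1" for \<alpha>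
    proof -
      have "renyi_div \<alpha> (mech_distr ?M (ptr_gauss_out m k \<sigma> \<delta>) D) (mech_distr ?M (ptr_gauss_out m k \<sigma> \<delta>) D') = 0"
        unfolding mech_distr_def
        by (rule two_point_degenerate[OF PM PM, where ?o1.0 = None and ?o2.0 = "Some (topk m k D)"
              and ?o2' = "Some (topk m k D')" and ?A1.0 = "{..c}" and ?A2.0 = "{..c}"])
           (simp_all add: o_eq o'_eq ac sM m1)
      thus ?thesis using al s by simp
    qed
    thus ?thesis using Emeas Ebig by (intro exI[of _ "{..c}"]) simp
  qed
qed

theorem mainTheorem8:
  fixes m k :: nat and \<delta>t \<epsilon> \<sigma>2 :: real
  assumes "1 \<le> k" and "k \<le> m - 1"
    and "0 < \<delta>t" and "\<delta>t < 1"
  shows "(\<epsilon> > 0 \<longrightarrow> is_dp m (laplace_distr (1 / \<epsilon>)) (ptr_laplace_out m k \<epsilon> \<delta>t) \<epsilon> \<delta>t)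
       \<and> (\<sigma>2 > 0 \<longrightarrow> approx_rdp m (gauss_distr \<sigma>2) (ptr_gauss_out m k \<sigma>2 \<delta>t) \<delta>t
                        (\<lambda>\<alpha>. \<alpha> / (2 * \<sigma>2 ^ 2)))"
  using lap_dp[OF assms] gauss_rdp[OF assms] by blast

end
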